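(* Let $T$ be a tree of order $n\ge 2$ and let $X\in\mathbb R^{V(T)}$ be a vector all of whose entries are non-negative, or all of whose entries are non-positive. Label the vertices $v_1,\dots,v_n$ of $T$ so that $|X_{v_1}|\ge |X_{v_2}|\ge\cdots\ge |X_{v_n}|$, and write $X_i=X_{v_i}$. Then $$\sum_{uv\in E(T)}X_uX_v\ \le\ \sum_{i=2}^n X_1X_i ,$$ where the right-hand side equals $\sum_{uv\in E(K_{1,n-1})}X_uX_v$ for the star $K_{1,n-1}$ on the same vertex set with center $v_1$. If moreover all entries of $X$ are positive (or all are negative) and $|X_1|>|X_2|$, then equality holds only if $T$ is the star $K_{1,n-1}$ with center $v_1$.
   Context: $K_{1,n-1}$ denotes the star of order $n$; its vertex of degree $n-1$ is called the center. *)

theory Defs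
  imports Complex_Main
begin

definition simple_graph :: "'a set \<Rightarrow> 'a set set \<Rightarrow> bool" where
  "simple_graph V E \<longleftrightarrow> finite V \<and>
     (\<forall>e\<in>E. \<exists>u v. u \<in> V \<and> v \<in> V \<and> u \<noteq> v \<and> e = {u, v})"

definition connected_graph :: "'a set \<Rightarrow> 'a set set \<Rightarrow> bool" where
  "connected_graph V E \<longleftrightarrow> (\<forall>u\<in>V. \<forall>v\<in>V. (\<lambda>x y. {x, y} \<in> E)\<^sup>*\<^sup>* u v)"

definition is_cycle :: "'a set set \<Rightarrow> 'a list \<Rightarrow> bool" where
  "is_cycle E cs \<longleftrightarrow> length cs \<ge> 3 \<and> distinct cs \<and>
     (\<forall>i. Suc i < length cs \<longrightarrow> {cs ! i, cs ! Suc i} \<in> E) \<and> {last cs, hd cs} \<in> E"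

definition acyclic_graph :: "'a set set \<Rightarrow> bool" where
  "acyclic_graph E \<longleftrightarrow> \<not> (\<exists>cs. is_cycle E cs)"

definition is_tree :: "'a set \<Rightarrow> 'a set set \<Rightarrow> bool" where
  "is_tree V E \<longleftrightarrow> simple_graph V E \<and> connected_graph V E \<and> acyclic_graph E"

definition star_edges :: "'a set \<Rightarrow> 'a \<Rightarrow> 'a set set" where
  "star_edges V c = {{c, v} | v. v \<in> V \<and> v \<noteq> c}"

end

theory Submission imports Defs begin
definition conn :: "'a set set \<Rightarrow> 'a \<Rightarrow> 'a \<Rightarrow> bool" where
  "conn F = (\<lambda>x y. {x,y} \<in> F)\<^sup>*\<^sup>*"

lemma conn_refl: "conn F x x" by (simp add: conn_def)
lemma conn_edge: "{x,y} \<in> F \<Longrightarrow> conn F x y" by (simp add: conn_def r_into_rtranclp)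
lemma conn_trans: "conn F x y \<Longrightarrow> conn F y z \<Longrightarrow> conn F x z"
  unfolding conn_def by (rule rtranclp_trans)
lemma conn_sym: "conn F x y \<Longrightarrow> conn F y x"
  unfolding conn_def
proof (induction rule: rtranclp_induct)
  case base show ?case by simp
next
  case (step y z)
  have "{z,y} \<in> F" using step(2) by (simp add: insert_commute)
  then show ?case using step(3) by (meson converse_rtranclp_into_rtranclp)
qed
lemma conn_mono: assumes "F \<subseteq> G" "conn F x y" shows "conn G x y"
  using assms(2) unfolding conn_def
  by (induction rule: rtranclp_induct) (use assms(1) in \<open>auto intro: rtranclp.rtrancl_into_rtrancl\<close>)

fun walk :: "'a set set \<Rightarrow> 'a list \<Rightarrow> bool" where
  "walk F [] = False"
| "walk F [x] = True"
| "walk F (x#y#xs) = ({x,y}\<in>F \<and> walk F (y#xs))"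

lemma walk_tl: "walk F (x#xs) \<Longrightarrow> xs\<noteq>[] \<Longrightarrow> walk F xs" by (cases xs) auto

lemma walk_suffix: "walk F (xs @ ys) \<Longrightarrow> ys \<noteq> [] \<Longrightarrow> walk F ys"
  by (induction xs) (auto dest: walk_tl)

lemma walk_nth: "walk F ps \<Longrightarrow> Suc i < length ps \<Longrightarrow> {ps!i, ps!Suc i} \<in> F"
  by (induction F ps arbitrary: i rule: walk.induct) (auto simp: nth_Cons split: nat.splits)

lemma conn_path: "conn F a b \<Longrightarrow> \<exists>ps. walk F ps \<and> distinct ps \<and> hd ps = a \<and> last ps = b"
  unfolding conn_def
proof (induction rule: converse_rtranclp_induct)
  case base show ?case by (rule exI[of _ "[b]"]) simp
next
  case (step a y)
  then obtain ps where ps: "walk F ps" "distinct ps" "hd ps = y" "last ps = b" by blast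
  show ?case
  proof (cases "a \<in> set ps")
    case True
    then obtain xs ys where xs: "ps = xs @ a # ys" by (meson split_list)
    have "walk F (a#ys)" using ps(1) xs walk_suffix[of F xs "a#ys"] by simp
    moreover have "distinct (a#ys)" using ps(2) xs by simp
    moreover have "last (a#ys) = b" using ps(4) xs by simp
    ultimately show ?thesis by (intro exI[of _ "a#ys"]) simp
  next
    case False
    obtain z zs where "ps = z#zs" using ps(1) by (cases ps) auto
    then have "walk F (a#ps)" using ps step(1) by simp
    moreover have "distinct (a#ps)" using ps(2) False by simp
    moreover have "last (a#ps) = b" using ps(4) \<open>ps = z#zs\<close> by simp
    ultimately show ?thesis by (intro exI[of _ "a#ps"]) simp
  qed
qed

lemma no_conn_after_removal:
  assumes "acyclic_graph F" "{a,b} \<in> F" "a \<noteq> b" "conn (F - {{a,b}}) a b" shows False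
proof -
  from conn_path[OF assms(4)] obtain ps where ps: "walk (F - {{a,b}}) ps" "distinct ps" "hd ps = a" "last ps = b"
    by (elim exE conjE)
  have len: "length ps \<ge> 3"
  proof (rule ccontr)
    assume "\<not> ?thesis"
    then obtain x xs where px: "ps = x # xs" "length xs \<le> 1" using ps(1) by (cases ps) auto
    show False
    proof (cases xs)
      case Nil then show False using px ps assms(3) by simp
    next
      case (Cons y ys) then have "ys = []" using px by simp
      then show False using px ps Cons by simp
    qed
  qed
  have c: "\<forall>i. Suc i < length ps \<longrightarrow> {ps ! i, ps ! Suc i} \<in> F"
    using walk_nth[OF ps(1)] by blast
  have "{last ps, hd ps} \<in> F" using ps(3,4) assms(2) by (simp add: insert_commute)
  then have "is_cycle F ps" unfolding is_cycle_def
    using len ps(2) c by blast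
  then show False using assms(1) unfolding acyclic_graph_def by blast
qed

lemma conn_induct[consumes 1, case_names base step]:
  assumes "conn F x y" "P x" "\<And>y z. conn F x y \<Longrightarrow> {y,z}\<in>F \<Longrightarrow> P y \<Longrightarrow> P z"
  shows "P y"
  using assms(1) unfolding conn_def
proof (induction rule: rtranclp_induct)
  case base then show ?case using assms(2) .
next
  case (step y z) then show ?case using assms(3)[of y z] unfolding conn_def by blast
qed

lemma conn_split:
  assumes "conn F x y"
  shows "conn (F-{{a,b}}) x y \<or> (conn (F-{{a,b}}) x a \<and> conn (F-{{a,b}}) b y)
      \<or> (conn (F-{{a,b}}) x b \<and> conn (F-{{a,b}}) a y)"
  using assms
proof (induction rule: conn_induct)
  case base then show ?case by (simp add: conn_refl)
next
  case (step y z)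
  show ?case
  proof (cases "{y,z} = {a,b}")
    case False
    then have yz: "conn (F-{{a,b}}) y z" using step(2) by (intro conn_edge) auto
    from step(3) show ?thesis
    proof (elim disjE conjE)
      assume "conn (F-{{a,b}}) x y" then show ?thesis using conn_trans[OF _ yz] by (intro disjI1)
    next
      assume "conn (F-{{a,b}}) x a" "conn (F-{{a,b}}) b y"
      then show ?thesis using conn_trans[OF _ yz, of b] by simp
    next
      assume "conn (F-{{a,b}}) x b" "conn (F-{{a,b}}) a y"
      then show ?thesis using conn_trans[OF _ yz, of a] by simp
    qed
  next
    case True
    then have "(y=a \<and> z=b) \<or> (y=b \<and> z=a)" by (auto simp: doubleton_eq_iff)
    then show ?thesis
    proof
      assume yz: "y=a \<and> z=b"
      have "conn (F-{{a,b}}) x a \<or> conn (F-{{a,b}}) x b" using step(3) yz by auto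
      then show ?thesis using yz conn_refl[of "F-{{a,b}}" b] by auto
    next
      assume yz: "y=b \<and> z=a"
      have "conn (F-{{a,b}}) x a \<or> conn (F-{{a,b}}) x b" using step(3) yz by auto
      then show ?thesis using yz conn_refl[of "F-{{a,b}}" a] by auto
    qed
  qed
qed

theorem lemma3p1:
  fixes V :: "'a set" and E :: "'a set set" and X :: "'a \<Rightarrow> real"
    and v :: "nat \<Rightarrow> 'a" and n :: nat
  assumes tree: "is_tree V E"
    and n: "card V = n" "n \<ge> 2"
    and sign: "(\<forall>u\<in>V. X u \<ge> 0) \<or> (\<forall>u\<in>V. X u \<le> 0)"
    and lab: "bij_betw v {1..n} V"
    and sorted: "\<forall>i j. 1 \<le> i \<and> i \<le> j \<and> j \<le> n \<longrightarrow> \<bar>X (v j)\<bar> \<le> \<bar>X (v i)\<bar>"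
  shows "(\<Sum>e\<in>E. \<Prod>x\<in>e. X x) \<le> (\<Sum>i=2..n. X (v 1) * X (v i))
    \<and> (\<Sum>i=2..n. X (v 1) * X (v i)) = (\<Sum>e\<in>star_edges V (v 1). \<Prod>x\<in>e. X x)
    \<and> (((\<forall>u\<in>V. X u > 0) \<or> (\<forall>u\<in>V. X u < 0)) \<and> \<bar>X (v 1)\<bar> > \<bar>X (v 2)\<bar>
        \<and> (\<Sum>e\<in>E. \<Prod>x\<in>e. X x) = (\<Sum>i=2..n. X (v 1) * X (v i))
        \<longrightarrow> E = star_edges V (v 1))"
proof -
  let ?r = "v 1"
  have fin: "finite V" using tree by (simp add: is_tree_def simple_graph_def)
  have edge: "\<And>e. e \<in> E \<Longrightarrow> \<exists>a b. a\<in>V \<and> b\<in>V \<and> a\<noteq>b \<and> e={a,b}"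
    using tree by (auto simp: is_tree_def simple_graph_def)
  have acyc: "acyclic_graph E" using tree by (simp add: is_tree_def)
  have connV: "\<And>x y. x\<in>V \<Longrightarrow> y\<in>V \<Longrightarrow> conn E x y"
    using tree by (simp add: is_tree_def connected_graph_def conn_def)
  have finE: "finite E"
    by (rule finite_subset[of E "Pow V"]) (use edge fin in auto)
  have vV: "\<And>i. i \<in> {1..n} \<Longrightarrow> v i \<in> V" using lab by (auto simp: bij_betw_def)
  have Vv: "\<And>u. u \<in> V \<Longrightarrow> \<exists>i\<in>{1..n}. u = v i" using lab by (auto simp: bij_betw_def)
  have rV: "?r \<in> V" using vV n by auto
  have absle: "\<And>u. u \<in> V \<Longrightarrow> \<bar>X u\<bar> \<le> \<bar>X ?r\<bar>"
    using Vv sorted by fastforce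
  have orient: "\<exists>a b. e={a,b} \<and> a\<noteq>b \<and> a\<in>V \<and> b\<in>V \<and> \<not>conn (E-{e}) ?r a \<and> conn (E-{e}) ?r b"
    if e: "e \<in> E" for e
  proof -
    obtain a b where ab: "a\<in>V" "b\<in>V" "a\<noteq>b" "e={a,b}" using edge[OF e] by blast
    have "conn E ?r a" using connV rV ab by blast
    then have "conn (E-{e}) ?r a \<or> conn (E-{e}) ?r b" using conn_split[of E ?r a a b] ab(4) by auto
    moreover have "\<not> (conn (E-{e}) ?r a \<and> conn (E-{e}) ?r b)"
    proof
      assume "conn (E-{e}) ?r a \<and> conn (E-{e}) ?r b"
      then have "conn (E-{{a,b}}) a b" using ab(4) conn_sym conn_trans by metis
      then show False using no_conn_after_removal[OF acyc _ ab(3)] e ab(4) by blast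
    qed
    ultimately show ?thesis using ab by (metis insert_commute)
  qed
  define g where "g e = (THE u. u \<in> e \<and> \<not> conn (E-{e}) ?r u)" for e
  define h where "h e = (THE u. u \<in> e \<and> conn (E-{e}) ?r u)" for e
  have gh: "e = {g e, h e} \<and> g e \<noteq> h e \<and> g e \<in> V \<and> h e \<in> V \<and> \<not>conn (E-{e}) ?r (g e) \<and> conn (E-{e}) ?r (h e)"
    if e: "e \<in> E" for e
  proof -
    obtain a b where ab: "e={a,b}" "a\<noteq>b" "a\<in>V" "b\<in>V" "\<not>conn (E-{e}) ?r a" "conn (E-{e}) ?r b"
      using orient[OF e] by blast
    have "g e = a" unfolding g_def using ab by (intro the_equality) auto
    moreover have "h e = b" unfolding h_def using ab by (intro the_equality) auto
    ultimately show ?thesis using ab by simp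
  qed
  have gr: "g e \<noteq> ?r" if "e \<in> E" for e using gh[OF that] conn_refl by metis
  have inj: "inj_on g E"
  proof (rule inj_onI)
    fix e1 e2 assume e1: "e1\<in>E" and e2: "e2\<in>E" and eq: "g e1 = g e2"
    show "e1 = e2"
    proof (rule ccontr)
      assume ne: "e1 \<noteq> e2"
      define u where "u = g e1"
      have E1: "e1 = {u, h e1}" and E2: "e2 = {u, h e2}" using gh[OF e1] gh[OF e2] eq u_def by auto
      have nu1: "\<not>conn (E-{e1}) ?r u" and nu2: "\<not>conn (E-{e2}) ?r u"
        using gh[OF e1] gh[OF e2] eq u_def by auto
      have cb: "conn (E-{e2}) ?r (h e2)" using gh[OF e2] by blast
      have uh2: "u \<noteq> h e2" using gh[OF e2] eq u_def by auto
      have "conn (E-{e1}) u (h e2)" using E2 e2 ne by (intro conn_edge) auto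
      hence nb: "\<not> conn (E-{e1}) ?r (h e2)" using nu1 conn_sym conn_trans by metis
      have "conn (E-{e2}) (h e2) ?r" using cb conn_sym by metis
      from conn_split[OF this, of u "h e1"]
      have d: "conn (E-{e2}-{e1}) (h e2) ?r \<or> (conn (E-{e2}-{e1}) (h e2) u \<and> conn (E-{e2}-{e1}) (h e1) ?r)
         \<or> (conn (E-{e2}-{e1}) (h e2) (h e1) \<and> conn (E-{e2}-{e1}) u ?r)" using E1 by simp
      have s1: "E-{e2}-{e1} \<subseteq> E-{e1}" and s2: "E-{e2}-{e1} \<subseteq> E-{e2}" by auto
      show False
      proof -
        { assume "conn (E-{e2}-{e1}) (h e2) ?r"
          then have False using conn_mono[OF s1] nb conn_sym by metis }
        moreover
        { assume "conn (E-{e2}-{e1}) u ?r"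
          then have False using conn_mono[OF s1] nu1 conn_sym by metis }
        moreover
        { assume "conn (E-{e2}-{e1}) (h e2) u"
          then have "conn (E-{{u, h e2}}) u (h e2)" using conn_mono[OF s2] conn_sym E2 by metis
          moreover have "{u, h e2} \<in> E" using e2 E2 by simp
          ultimately have False using no_conn_after_removal[OF acyc _ uh2] by blast }
        ultimately show False using d by blast
      qed
    qed
  qed
  have sgn: "X x * X w = \<bar>X x\<bar> * \<bar>X w\<bar> \<and> X x * X w \<ge> 0" if "x \<in> V" "w \<in> V" for x w
  proof -
    have "X x * X w \<ge> 0" using sign that by (auto intro: mult_nonneg_nonneg mult_nonpos_nonpos)
    then show ?thesis by (simp add: abs_mult[symmetric])
  qed
  have Pe: "(\<Prod>x\<in>e. X x) = X (g e) * X (h e)" if "e \<in> E" for e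
  proof -
    have E: "e = {g e, h e}" and ne: "g e \<noteq> h e" using gh[OF that] by auto
    have "prod X e = prod X {g e, h e}" using E by (rule arg_cong)
    also have "\<dots> = X (g e) * X (h e)" using ne by simp
    finally show ?thesis .
  qed
  have step1: "(\<Prod>x\<in>e. X x) \<le> X ?r * X (g e)" if e: "e \<in> E" for e
  proof -
    have "X (g e) * X (h e) = \<bar>X (g e)\<bar> * \<bar>X (h e)\<bar>" using sgn gh[OF e] by blast
    also have "\<dots> \<le> \<bar>X (g e)\<bar> * \<bar>X ?r\<bar>" using absle gh[OF e] by (intro mult_left_mono) auto
    also have "\<dots> = X ?r * X (g e)" using sgn gh[OF e] rV by (metis mult.commute)
    finally show ?thesis using Pe[OF e] by simp
  qed
  define S where "S = (\<Sum>e\<in>E. \<Prod>x\<in>e. X x)"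
  define A where "A = (\<Sum>e\<in>E. X ?r * X (g e))"
  define T where "T = (\<Sum>u\<in>V-{?r}. X ?r * X u)"
  have SA: "S \<le> A" unfolding S_def A_def by (rule sum_mono) (use step1 in auto)
  have gE: "g ` E \<subseteq> V - {?r}" using gh gr by auto
  have A2: "A = (\<Sum>u\<in>g`E. X ?r * X u)" unfolding A_def using sum.reindex[OF inj, of "\<lambda>u. X ?r * X u"] by simp
  have AT: "A \<le> T" unfolding A2 T_def
    by (rule sum_mono2) (use fin gE sgn rV in auto)
  have bij2: "bij_betw v {2..n} (V - {?r})"
  proof -
    have "bij_betw v ({1..n} - {1}) (V - {v 1})"
      by (rule bij_betw_DiffI[OF lab]) (use n vV in \<open>auto simp: bij_betw_def\<close>)
    moreover have "{1..n} - {1} = {2..n}" by auto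
    ultimately show ?thesis by simp
  qed
  have TT: "T = (\<Sum>i=2..n. X (v 1) * X (v i))"
    unfolding T_def using sum.reindex_bij_betw[OF bij2, of "\<lambda>u. X ?r * X u"] by simp
  have star: "(\<Sum>e\<in>star_edges V ?r. \<Prod>x\<in>e. X x) = T"
  proof -
    have se: "star_edges V ?r = (\<lambda>u. {?r,u}) ` (V - {?r})" unfolding star_edges_def by auto
    have ij: "inj_on (\<lambda>u. {?r,u}) (V - {?r})" by (rule inj_onI) (auto simp: doubleton_eq_iff)
    have "(\<Sum>e\<in>star_edges V ?r. \<Prod>x\<in>e. X x) = (\<Sum>u\<in>V-{?r}. \<Prod>x\<in>{?r,u}. X x)"
      unfolding se using sum.reindex[OF ij] by simp
    also have "\<dots> = T" unfolding T_def by (rule sum.cong) auto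
    finally show ?thesis .
  qed
  have eqcase: "E = star_edges V ?r"
    if strict: "(\<forall>u\<in>V. X u > 0) \<or> (\<forall>u\<in>V. X u < 0)" and big: "\<bar>X ?r\<bar> > \<bar>X (v 2)\<bar>" and eq: "S = T"
  proof -
    have SA': "S = A" and AT': "A = T" using SA AT eq by auto
    have "(\<Sum>e\<in>E. X ?r * X (g e) - (\<Prod>x\<in>e. X x)) = 0"
      using SA' unfolding S_def A_def by (simp add: sum_subtractf)
    then have z: "\<forall>e\<in>E. X ?r * X (g e) - (\<Prod>x\<in>e. X x) = 0"
      using sum_nonneg_eq_0_iff[OF finE] step1 by (smt (verit))
    have nz: "\<And>u. u \<in> V \<Longrightarrow> X u \<noteq> 0" using strict by force
    have hr: "h e = ?r" if e: "e \<in> E" for e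
    proof -
      have "X (g e) * X (h e) = X (g e) * X ?r" using z e Pe[OF e] by (simp add: mult.commute)
      then have "X (h e) = X ?r" using nz gh[OF e] by simp
      moreover obtain i where i: "i \<in> {1..n}" "h e = v i" using Vv gh[OF e] by blast
      moreover have "i \<ge> 2 \<Longrightarrow> \<bar>X (v i)\<bar> \<le> \<bar>X (v 2)\<bar>" using sorted i by auto
      ultimately have "i = 1" using big by (cases "i \<ge> 2") auto
      then show ?thesis using i by simp
    qed
    have "(\<Sum>u\<in>(V-{?r}) - g`E. X ?r * X u) = 0"
      using AT' sum.subset_diff[OF gE, of "\<lambda>u. X ?r * X u"] fin unfolding A2 T_def by simp
    moreover have "\<And>u. u \<in> V \<Longrightarrow> X ?r * X u > 0" using strict rV
      by (auto intro: mult_pos_pos mult_neg_neg)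
    ultimately have "(V-{?r}) - g`E = {}" using fin
      by (metis (no_types, lifting) Diff_iff finite_Diff less_irrefl sum_pos)
    then have cov: "V - {?r} \<subseteq> g ` E" by blast
    show ?thesis
    proof
      show "E \<subseteq> star_edges V ?r"
      proof
        fix e assume e: "e \<in> E"
        then have "e = {?r, g e}" using gh[OF e] hr[OF e] by auto
        then show "e \<in> star_edges V ?r" unfolding star_edges_def using gh[OF e] gr[OF e] by blast
      qed
    next
      show "star_edges V ?r \<subseteq> E"
      proof
        fix e assume "e \<in> star_edges V ?r"
        then obtain u where u: "u \<in> V" "u \<noteq> ?r" "e = {?r, u}" unfolding star_edges_def by blast
        then obtain e' where e': "e' \<in> E" "u = g e'" using cov by blast
        then have "e' = {?r, u}" using gh[OF e'(1)] hr[OF e'(1)] by auto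
        then show "e \<in> E" using u e' by simp
      qed
    qed
  qed
  show ?thesis using SA AT TT star eqcase unfolding S_def by auto
qed

end
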